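(* Given two trees $T$ and $T'$, there exists a tree $T''$ whose subdivision is a refinement of the subdivisions of both $T$ and $T'$ (every endpoint of a leaf interval of $T$ or of $T'$ is an endpoint of a leaf interval of $T''$).
   Context: Let $\tau=(\sqrt5-1)/2$, so $\tau^2+\tau=1$. A tree is a finite rooted binary tree whose carets (non-leaf vertex with its two children) are each labelled $x$-type or $y$-type. Vertices correspond to subintervals of $[0,1]$: the root to $[0,1]$; if a vertex corresponds to $[p,p+\tau^k]$, an $x$-type caret there gives children $[p,p+\tau^{k+2}]$ (left) and $[p+\tau^{k+2},p+\tau^k]$ (right), and a $y$-type caret gives $[p,p+\tau^{k+1}]$ (left) and $[p+\tau^{k+1},p+\tau^k]$ (right). The subdivision of a tree is the decomposition of $[0,1]$ into the intervals of its leaves. *)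

theory Defs
  imports Complex_Main
begin

definition tau :: real where "tau = (sqrt 5 - 1) / 2"

datatype tree = Leaf | XCaret tree tree | YCaret tree tree

text \<open>Leaf intervals of a tree whose root corresponds to the interval [p, p + tau^k],
  each leaf interval [q, q + tau^j] represented by the pair (q, j).\<close>
fun leaf_intervals :: "real \<Rightarrow> nat \<Rightarrow> tree \<Rightarrow> (real \<times> nat) set" where
  "leaf_intervals p k Leaf = {(p, k)}"
| "leaf_intervals p k (XCaret l r) =
     leaf_intervals p (k + 2) l \<union> leaf_intervals (p + tau ^ (k + 2)) (k + 1) r"
| "leaf_intervals p k (YCaret l r) =
     leaf_intervals p (k + 1) l \<union> leaf_intervals (p + tau ^ (k + 1)) (k + 2) r"

definition subdivision :: "tree \<Rightarrow> real set set" where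
  "subdivision T = (\<lambda>(q, j). {q .. q + tau ^ j}) ` leaf_intervals 0 0 T"

definition endpoints :: "tree \<Rightarrow> real set" where
  "endpoints T = (\<Union>(q, j) \<in> leaf_intervals 0 0 T. {q, q + tau ^ j})"

end

theory Submission
  imports Defs
begin

definition ep :: "real \<Rightarrow> nat \<Rightarrow> tree \<Rightarrow> real set" where
  "ep p k T = (\<Union>(q, j) \<in> leaf_intervals p k T. {q, q + tau ^ j})"

lemma ep_Leaf[simp]: "ep p k Leaf = {p, p + tau ^ k}"
  by (simp add: ep_def)
lemma ep_X[simp]: "ep p k (XCaret l r) = ep p (k+2) l \<union> ep (p + tau^(k+2)) (k+1) r"
  by (simp add: ep_def)
lemma ep_Y[simp]: "ep p k (YCaret l r) = ep p (k+1) l \<union> ep (p + tau^(k+1)) (k+2) r"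
  by (simp add: ep_def)

lemma tau_sq: "tau^2 + tau = 1"
proof -
  have "(sqrt 5)^2 = 5" by simp
  then show ?thesis unfolding tau_def by (simp add: field_simps power2_eq_square)
qed

lemma tau_rec: "tau^(k+2) + tau^(k+1) = tau^k"
proof -
  have "tau^(k+2) + tau^(k+1) = tau^k * (tau^2 + tau)" by (simp add: algebra_simps power_add power2_eq_square)
  then show ?thesis using tau_sq by simp
qed

lemma tau_rec': "p + tau^(k+2) + tau^(k+1) = p + (tau^k::real)"
  using tau_rec[of k] by simp

lemma ends_in: "p \<in> ep p k T \<and> p + tau^k \<in> ep p k T"
proof (induction T arbitrary: p k)
  case Leaf then show ?case by simp
next
  case (XCaret l r)
  then show ?case using tau_rec'[of p k] by (metis UnI1 UnI2 ep_X)
next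
  case (YCaret l r)
  have "p + tau^(k+1) + tau^(k+2) = p + tau^k" using tau_rec'[of p k] by simp
  then show ?case using YCaret by (metis UnI1 UnI2 ep_Y)
qed

lemma toXY: "(\<exists>a b. ep p k T \<subseteq> ep p k (XCaret a b)) \<and> (\<exists>a b. ep p k T \<subseteq> ep p k (YCaret a b))"
proof (induction T arbitrary: p k)
  case Leaf
  have "ep p k Leaf \<subseteq> ep p k (XCaret Leaf Leaf)" using tau_rec'[of p k] by auto
  moreover have "ep p k Leaf \<subseteq> ep p k (YCaret Leaf Leaf)" using tau_rec'[of p k] by auto
  ultimately show ?case by blast
next
  case (XCaret a1 a2)
  obtain e1 e2 where e: "ep (p + tau^(k+2)) (k+1) a2 \<subseteq> ep (p + tau^(k+2)) (k+1) (XCaret e1 e2)"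
    using XCaret.IH(2) by blast
  have eq: "p + tau^(k+2) + tau^(k+1+2) = p + tau^(k+1)" using tau_rec'[of p "k+1"] by simp
  have "ep p k (XCaret a1 a2) \<subseteq> ep p k (YCaret (YCaret a1 e1) e2)"
    using e eq by (auto simp: add.assoc numeral_2_eq_2)
  then show ?case by blast
next
  case (YCaret b1 b2)
  obtain d1 d2 where d: "ep p (k+1) b1 \<subseteq> ep p (k+1) (YCaret d1 d2)"
    using YCaret.IH(1) by blast
  have eq: "p + tau^(k+2) + tau^(k+1+2) = p + tau^(k+1)" using tau_rec'[of p "k+1"] by simp
  have "ep p k (YCaret b1 b2) \<subseteq> ep p k (XCaret d1 (XCaret d2 b2))"
    using d eq by (auto simp: add.assoc numeral_2_eq_2)
  then show ?case by blast
qed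

lemma combine: "\<exists>C. ep p k A \<union> ep p k B \<subseteq> ep p k C"
proof (induction A arbitrary: B p k)
  case Leaf
  then show ?case using ends_in[of p k B] by auto
next
  case (XCaret a1 a2)
  obtain b1 b2 where b: "ep p k B \<subseteq> ep p k (XCaret b1 b2)" using toXY by blast
  obtain c1 where c1: "ep p (k+2) a1 \<union> ep p (k+2) b1 \<subseteq> ep p (k+2) c1" using XCaret.IH(1) by blast
  obtain c2 where c2: "ep (p + tau^(k+2)) (k+1) a2 \<union> ep (p + tau^(k+2)) (k+1) b2
      \<subseteq> ep (p + tau^(k+2)) (k+1) c2" using XCaret.IH(2) by blast
  have "ep p k (XCaret a1 a2) \<union> ep p k B \<subseteq> ep p k (XCaret c1 c2)" using b c1 c2 by auto
  then show ?case by blast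
next
  case (YCaret a1 a2)
  obtain b1 b2 where b: "ep p k B \<subseteq> ep p k (YCaret b1 b2)" using toXY by blast
  obtain c1 where c1: "ep p (k+1) a1 \<union> ep p (k+1) b1 \<subseteq> ep p (k+1) c1" using YCaret.IH(1) by blast
  obtain c2 where c2: "ep (p + tau^(k+1)) (k+2) a2 \<union> ep (p + tau^(k+1)) (k+2) b2
      \<subseteq> ep (p + tau^(k+1)) (k+2) c2" using YCaret.IH(2) by blast
  have "ep p k (YCaret a1 a2) \<union> ep p k B \<subseteq> ep p k (YCaret c1 c2)" using b c1 c2 by auto
  then show ?case by blast
qed

theorem mainTheorem11:
  fixes T T' :: tree
  shows "\<exists>T''. endpoints T \<subseteq> endpoints T'' \<and> endpoints T' \<subseteq> endpoints T''"
proof -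
  obtain C where "ep 0 0 T \<union> ep 0 0 T' \<subseteq> ep 0 0 C" using combine by blast
  then show ?thesis unfolding endpoints_def ep_def[symmetric] by blast
qed

end
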